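(* Let $\mathbb X$ be a Euclidean space, $g\colon\mathbb X\to\mathbb R^m$ twice continuously differentiable, $D\subset\mathbb R^m$ closed and locally polyhedral around $g(\bar x)$, $\Phi(x):=g(x)-D$, $(\bar x,0)\in\operatorname{gph}\Phi$, $u\in\mathbb S_{\mathbb X}$. Assume SOSCMS$(u)$: for all $y^*$, [$\nabla g(\bar x)^*y^*=0$, $\nabla^2\langle y^*,g\rangle(\bar x)[u,u]\ge0$, $y^*\in\mathcal N_D(g(\bar x);\nabla g(\bar x)u)$] implies $y^*=0$. Then: (a) for each $s\in\mathbb X$ and all $y^*,z^*$, [$\nabla g(\bar x)^*y^*=0$, $\nabla^2\langle y^*,g\rangle(\bar x)(u)+\nabla g(\bar x)^*z^*=0$, $y^*\in\mathcal N_{\mathbf T(u)}(w_s(u,0))$, and $z^*\in\mathcal N_{\mathbf T(u)}(w_s(u,0))$ or $z^*\in\mathcal T_{\mathcal N_{\mathbf T(u)}(w_s(u,0))}(y^* )$] implies $y^*=0$; and (b) for each $x^*,s\in\mathbb X$, $y^*,z^*\in\mathbb R^m$ and $\alpha\ge0$ with $v:=\alpha y^*$ satisfying $x^*=\nabla^2\langle y^*,g\rangle(\bar x)(u)+\nabla g(\bar x)^*z^*$, $y^*\in\mathcal N_{\mathbf T(u)}(w_s(u,v))\cap\ker\nabla g(\bar x)^*$, and $z^*\in\mathcal N_{\mathbf T(u)}(w_s(u,v))$ or $z^*\in\mathcal T_{\mathcal N_{\mathbf T(u)}(w_s(u,v))}(y^* )$, there is $\lambda\in\mathcal N_D(g(\bar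 x))$ with $x^*=\nabla g(\bar x)^*\lambda$.
   Context: $\mathbf T(u):=\mathcal T_{\mathcal T_D(g(\bar x))}(\nabla g(\bar x)u)$, $w_s(u,v):=\nabla g(\bar x)s+\tfrac12\nabla^2g(\bar x)[u,u]-v$, with $\nabla^2g(\bar x)[u,u]=(\langle u,\nabla^2g_i(\bar x)u\rangle)_{i=1}^m$; $\nabla^2\langle y^*,g\rangle(\bar x)(u)$ is the Hessian of $x\mapsto\langle y^*,g(x)\rangle$ applied to $u$ and $\nabla^2\langle y^*,g\rangle(\bar x)[u,u]$ the associated quadratic form. $\mathcal T$, $\mathcal N$ tangent and limiting normal cones; $\mathcal N_D(y;w)$ directional limiting normal cone (all $\eta$ with $w_k\to w$, $t_k\downarrow0$, $\eta_k\to\eta$, $\eta_k\in\widehat{\mathcal N}_D(y+t_kw_k)$). Locally polyhedral: intersection with a box around $g(\bar x)$ is a finite union of convex polyhedra. *)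

theory Defs
  imports "HOL-Analysis.Analysis"
begin

definition tangent_cone :: "'a::real_normed_vector set \<Rightarrow> 'a \<Rightarrow> 'a set" where
  "tangent_cone C x = {w. \<exists>t ws. (\<forall>k. t k > (0::real)) \<and> t \<longlonglongrightarrow> 0 \<and> ws \<longlonglongrightarrow> w
      \<and> (\<forall>k. x + t k *\<^sub>R ws k \<in> C)}"

definition regular_normal_cone :: "'a::real_inner set \<Rightarrow> 'a \<Rightarrow> 'a set" where
  "regular_normal_cone C x = (if x \<in> C then
     {\<eta>. \<forall>\<epsilon>>0. \<exists>\<delta>>0. \<forall>y\<in>C. norm (y - x) < \<delta> \<longrightarrow> \<eta> \<bullet> (y - x) \<le> \<epsilon> * norm (y - x)}
   else {})"

definition limiting_normal_cone :: "'a::real_inner set \<Rightarrow> 'a \<Rightarrow> 'a set" where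
  "limiting_normal_cone C x = {\<eta>. \<exists>xs es. (\<forall>k. xs k \<in> C) \<and> xs \<longlonglongrightarrow> x \<and> es \<longlonglongrightarrow> \<eta>
      \<and> (\<forall>k. es k \<in> regular_normal_cone C (xs k))}"

definition dir_limiting_normal_cone :: "'a::real_inner set \<Rightarrow> 'a \<Rightarrow> 'a \<Rightarrow> 'a set" where
  "dir_limiting_normal_cone C x w = {\<eta>. \<exists>t ws es. (\<forall>k. t k > (0::real)) \<and> t \<longlonglongrightarrow> 0
      \<and> ws \<longlonglongrightarrow> w \<and> es \<longlonglongrightarrow> \<eta> \<and> (\<forall>k. es k \<in> regular_normal_cone C (x + t k *\<^sub>R ws k))}"

definition locally_polyhedral :: "'a::euclidean_space set \<Rightarrow> 'a \<Rightarrow> bool" where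
  "locally_polyhedral D y \<longleftrightarrow> (\<exists>a b P. y \<in> box a b \<and> finite P \<and> (\<forall>p\<in>P. polyhedron p)
      \<and> D \<inter> cbox a b = \<Union>P)"

text \<open>Given the second derivative D2 (D2 u h = second derivative of g in directions u,h),
  the Hessian of x \<mapsto> <y,g x> applied to u: the vector v with v \<bullet> h = y \<bullet> D2 u h.\<close>
definition lag_hess_apply :: "('a::real_inner \<Rightarrow> 'a \<Rightarrow> 'b::real_inner) \<Rightarrow> 'b \<Rightarrow> 'a \<Rightarrow> 'a" where
  "lag_hess_apply D2 y u = adjoint (D2 u) y"

definition lag_hess_form :: "('a::real_inner \<Rightarrow> 'a \<Rightarrow> 'b::real_inner) \<Rightarrow> 'b \<Rightarrow> 'a \<Rightarrow> real" where
  "lag_hess_form D2 y u = y \<bullet> D2 u u"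

definition w_s :: "('a \<Rightarrow> 'b::real_vector) \<Rightarrow> ('a \<Rightarrow> 'a \<Rightarrow> 'b) \<Rightarrow> 'a \<Rightarrow> 'a \<Rightarrow> 'b \<Rightarrow> 'b" where
  "w_s Dg D2 s u v = Dg s + (1/2) *\<^sub>R D2 u u - v"

end

theory Submission
  imports Defs
begin


definition pcone :: "'a::real_vector set \<Rightarrow> bool" where
  "pcone K \<longleftrightarrow> (\<forall>x\<in>K. \<forall>c>0. c *\<^sub>R x \<in> K)"

lemma rn_local:
  fixes S S' :: "'a::real_inner set"
  assumes r: "r > 0" and eq: "S \<inter> ball p r = S' \<inter> ball p r"
    and h: "\<eta> \<in> regular_normal_cone S p"
  shows "\<eta> \<in> regular_normal_cone S' p"
proof -
  have pS: "p \<in> S" using h by (auto simp: regular_normal_cone_def split: if_splits)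
  have pb: "p \<in> ball p r" using r by simp
  have pS': "p \<in> S'" using eq pS pb by blast
  show ?thesis unfolding regular_normal_cone_def using pS'
  proof (simp, intro allI impI)
    fix e :: real assume e: "e > 0"
    from h pS e obtain d where d: "d > 0" and
      dd: "\<forall>y\<in>S. norm (y - p) < d \<longrightarrow> \<eta> \<bullet> (y - p) \<le> e * norm (y - p)"
      by (auto simp: regular_normal_cone_def)
    show "\<exists>d>0. \<forall>y\<in>S'. norm (y - p) < d \<longrightarrow> \<eta> \<bullet> (y - p) \<le> e * norm (y - p)"
    proof (intro exI[of _ "min d r"] conjI ballI impI)
      show "min d r > 0" using d r by simp
      fix y assume y: "y \<in> S'" "norm (y - p) < min d r"
      hence "y \<in> ball p r" by (simp add: dist_norm norm_minus_commute)
      hence "y \<in> S" using eq y(1) by blast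
      thus "\<eta> \<bullet> (y - p) \<le> e * norm (y - p)" using dd y(2) by auto
    qed
  qed
qed

lemma rn_translate:
  fixes K :: "'a::real_inner set"
  assumes h: "\<eta> \<in> regular_normal_cone K p"
  shows "\<eta> \<in> regular_normal_cone {x. x - c \<in> K} (c + p)"
proof -
  have pK: "p \<in> K" using h by (auto simp: regular_normal_cone_def split: if_splits)
  show ?thesis unfolding regular_normal_cone_def using pK
  proof (simp, intro allI impI)
    fix e :: real assume e: "e > 0"
    from h pK e obtain d where d: "d > 0" and
      dd: "\<forall>y\<in>K. norm (y - p) < d \<longrightarrow> \<eta> \<bullet> (y - p) \<le> e * norm (y - p)"
      by (auto simp: regular_normal_cone_def)
    show "\<exists>d>0. \<forall>y. y - c \<in> K \<longrightarrow> norm (y - (c + p)) < d \<longrightarrow> \<eta> \<bullet> (y - (c + p)) \<le> e * norm (y - (c + p))"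
    proof (intro exI[of _ d] conjI allI impI)
      fix y assume y: "y - c \<in> K" "norm (y - (c + p)) < d"
      have "norm ((y - c) - p) < d" using y(2) by (simp only: diff_diff_eq)
      hence "\<eta> \<bullet> ((y - c) - p) \<le> e * norm ((y - c) - p)" using dd y(1) by blast
      thus "\<eta> \<bullet> (y - (c + p)) \<le> e * norm (y - (c + p))" by (simp only: diff_diff_eq)
    qed (use d in auto)
  qed
qed

lemma rn_scale:
  fixes K :: "'a::real_inner set"
  assumes K: "pcone K" and t: "t > 0" and h: "\<eta> \<in> regular_normal_cone K p"
  shows "\<eta> \<in> regular_normal_cone K (t *\<^sub>R p)"
proof -
  have pK: "p \<in> K" using h by (auto simp: regular_normal_cone_def split: if_splits)
  hence tpK: "t *\<^sub>R p \<in> K" using K t by (auto simp: pcone_def)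
  show ?thesis unfolding regular_normal_cone_def using tpK
  proof (simp, intro allI impI)
    fix e :: real assume e: "e > 0"
    from h pK e obtain d where d: "d > 0" and
      dd: "\<forall>y\<in>K. norm (y - p) < d \<longrightarrow> \<eta> \<bullet> (y - p) \<le> e * norm (y - p)"
      by (auto simp: regular_normal_cone_def)
    show "\<exists>d>0. \<forall>y\<in>K. norm (y - t *\<^sub>R p) < d \<longrightarrow> \<eta> \<bullet> (y - t *\<^sub>R p) \<le> e * norm (y - t *\<^sub>R p)"
    proof (intro exI[of _ "t * d"] conjI ballI impI)
      show "t * d > 0" using t d by simp
      fix y assume y: "y \<in> K" "norm (y - t *\<^sub>R p) < t * d"
      have yK: "(1/t) *\<^sub>R y \<in> K" using K y(1) t by (auto simp: pcone_def)
      have eq: "y - t *\<^sub>R p = t *\<^sub>R ((1/t) *\<^sub>R y - p)" using t by (simp add: algebra_simps)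
      have "norm ((1/t) *\<^sub>R y - p) < d" using y(2) t unfolding eq by simp
      hence "\<eta> \<bullet> ((1/t) *\<^sub>R y - p) \<le> e * norm ((1/t) *\<^sub>R y - p)" using dd yK by auto
      hence "t * (\<eta> \<bullet> ((1/t) *\<^sub>R y - p)) \<le> t * (e * norm ((1/t) *\<^sub>R y - p))"
        using t by simp
      thus "\<eta> \<bullet> (y - t *\<^sub>R p) \<le> e * norm (y - t *\<^sub>R p)" 
        unfolding eq using t by (simp add: inner_scaleR_right mult.commute mult.left_commute)
    qed
  qed
qed

lemma rn_smult:
  fixes S :: "'a::real_inner set"
  assumes c: "c > 0" and h: "\<eta> \<in> regular_normal_cone S p"
  shows "c *\<^sub>R \<eta> \<in> regular_normal_cone S p"
proof -
  have pS: "p \<in> S" using h by (auto simp: regular_normal_cone_def split: if_splits)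
  show ?thesis unfolding regular_normal_cone_def using pS
  proof (simp, intro allI impI)
    fix e :: real assume e: "e > 0"
    have ec: "e / c > 0" using e c by simp
    from h pS have "\<forall>\<epsilon>>0. \<exists>\<delta>>0. \<forall>y\<in>S. norm (y - p) < \<delta> \<longrightarrow> \<eta> \<bullet> (y - p) \<le> \<epsilon> * norm (y - p)"
      by (simp add: regular_normal_cone_def)
    then obtain d where d: "d > 0" and
      dd: "\<forall>y\<in>S. norm (y - p) < d \<longrightarrow> \<eta> \<bullet> (y - p) \<le> (e / c) * norm (y - p)"
      using ec by blast
    show "\<exists>d>0. \<forall>y\<in>S. norm (y - p) < d \<longrightarrow> c * (\<eta> \<bullet> (y - p)) \<le> e * norm (y - p)"
    proof (intro exI[of _ d] conjI ballI impI)
      fix y assume y: "y \<in> S" "norm (y - p) < d"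
      hence "\<eta> \<bullet> (y - p) \<le> (e / c) * norm (y - p)" using dd by auto
      hence "c * (\<eta> \<bullet> (y - p)) \<le> c * ((e / c) * norm (y - p))" using c by (rule mult_left_mono[OF _ less_imp_le])
      thus "c * (\<eta> \<bullet> (y - p)) \<le> e * norm (y - p)" using c by simp
    qed (use d in auto)
  qed
qed

lemma rn_perp:
  fixes K :: "'a::real_inner set"
  assumes K: "pcone K" and h: "\<eta> \<in> regular_normal_cone K p"
  shows "\<eta> \<bullet> p = 0"
proof (cases "p = 0")
  case True thus ?thesis by simp
next
  case False
  hence np: "norm p > 0" by simp
  have pK: "p \<in> K" using h by (auto simp: regular_normal_cone_def split: if_splits)
  have "\<bar>\<eta> \<bullet> p\<bar> \<le> e * norm p" if e: "e > 0" for e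
  proof -
    from h pK e obtain d where d: "d > 0" and
      dd: "\<forall>y\<in>K. norm (y - p) < d \<longrightarrow> \<eta> \<bullet> (y - p) \<le> e * norm (y - p)"
      by (auto simp: regular_normal_cone_def)
    define s where "s = min (1/2) (d / (2 * norm p))"
    have s0: "s > 0" and s1: "s < 1" using d np by (auto simp: s_def)
    have sd: "s * norm p < d"
    proof -
      have "s \<le> d / (2 * norm p)" by (simp add: s_def)
      hence "s * norm p \<le> (d / (2 * norm p)) * norm p" by (rule mult_right_mono) simp
      also have "\<dots> = d/2" using np by simp
      finally show ?thesis using d by simp
    qed
    have y1: "(1 + s) *\<^sub>R p \<in> K" using K pK s0 by (auto simp: pcone_def)
    have y2: "(1 - s) *\<^sub>R p \<in> K" using K pK s1 by (auto simp: pcone_def)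
    have e1: "(1 + s) *\<^sub>R p - p = s *\<^sub>R p" by (simp add: algebra_simps)
    have e2: "(1 - s) *\<^sub>R p - p = - (s *\<^sub>R p)" by (simp add: algebra_simps)
    have n1: "norm ((1 + s) *\<^sub>R p - p) < d" unfolding e1 using sd s0 by simp
    have "\<eta> \<bullet> ((1 + s) *\<^sub>R p - p) \<le> e * norm ((1 + s) *\<^sub>R p - p)" using dd y1 n1 by blast
    hence "\<eta> \<bullet> (s *\<^sub>R p) \<le> e * norm (s *\<^sub>R p)" unfolding e1 .
    hence a: "s * (\<eta> \<bullet> p) \<le> s * (e * norm p)" using s0 by (simp add: mult_ac)
    have n2: "norm ((1 - s) *\<^sub>R p - p) < d" unfolding e2 using sd s0 by simp
    have "\<eta> \<bullet> ((1 - s) *\<^sub>R p - p) \<le> e * norm ((1 - s) *\<^sub>R p - p)" using dd y2 n2 by blast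
    hence "\<eta> \<bullet> (- (s *\<^sub>R p)) \<le> e * norm (- (s *\<^sub>R p))" unfolding e2 .
    hence b: "s * (- (\<eta> \<bullet> p)) \<le> s * (e * norm p)" using s0 by (simp add: mult_ac)
    from a b s0 show ?thesis by (smt (verit) mult_le_cancel_left_pos)
  qed
  note L = this
  show ?thesis
  proof (rule ccontr)
    assume ne: "\<eta> \<bullet> p \<noteq> 0"
    hence pos: "\<bar>\<eta> \<bullet> p\<bar> / (2 * norm p) > 0" using np by simp
    have "\<bar>\<eta> \<bullet> p\<bar> \<le> \<bar>\<eta> \<bullet> p\<bar> / (2 * norm p) * norm p" by (rule L[OF pos])
    also have "\<dots> = \<bar>\<eta> \<bullet> p\<bar> / 2" using np by simp
    finally show False using ne by simp
  qed
qed



definition fup :: "'a::euclidean_space set \<Rightarrow> bool" where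
  "fup K \<longleftrightarrow> (\<exists>KK. finite KK \<and> (\<forall>p\<in>KK. polyhedron p) \<and> K = \<Union>KK)"

definition locstr :: "'a::euclidean_space set \<Rightarrow> 'a \<Rightarrow> bool" where
  "locstr S y \<longleftrightarrow> (\<exists>e>0. \<exists>K. fup K \<and> pcone K \<and> S \<inter> ball y e = {x. x - y \<in> K} \<inter> ball y e)"

lemma fup_closed: "fup K \<Longrightarrow> closed K"
  unfolding fup_def using polyhedron_imp_closed by blast

lemma ball_eq_shrink:
  assumes "S \<inter> ball y e = T \<inter> ball y e" "e' \<le> e"
  shows "S \<inter> ball y e' = T \<inter> ball y e'"
proof -
  have "ball y e' \<subseteq> ball y e" using assms(2) by auto
  thus ?thesis using assms(1) by blast
qed

lemma locstr_union:
  assumes "locstr S y" "locstr T y"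
  shows "locstr (S \<union> T) y"
proof -
  obtain e1 K1 where e1: "e1 > 0" "fup K1" "pcone K1" "S \<inter> ball y e1 = {x. x - y \<in> K1} \<inter> ball y e1"
    using assms(1) unfolding locstr_def by blast
  obtain e2 K2 where e2: "e2 > 0" "fup K2" "pcone K2" "T \<inter> ball y e2 = {x. x - y \<in> K2} \<inter> ball y e2"
    using assms(2) unfolding locstr_def by blast
  define e where "e = min e1 e2"
  have a: "S \<inter> ball y e = {x. x - y \<in> K1} \<inter> ball y e"
    using ball_eq_shrink[OF e1(4)] by (simp add: e_def)
  have b: "T \<inter> ball y e = {x. x - y \<in> K2} \<inter> ball y e"
    using ball_eq_shrink[OF e2(4)] by (simp add: e_def)
  have "(S \<union> T) \<inter> ball y e = {x. x - y \<in> K1 \<union> K2} \<inter> ball y e"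
    using a b by blast
  moreover have "fup (K1 \<union> K2)"
  proof -
    obtain A where "finite A" "\<forall>p\<in>A. polyhedron p" "K1 = \<Union>A" using e1(2) unfolding fup_def by blast
    moreover obtain B where "finite B" "\<forall>p\<in>B. polyhedron p" "K2 = \<Union>B" using e2(2) unfolding fup_def by blast
    ultimately show ?thesis unfolding fup_def by (intro exI[of _ "A \<union> B"]) auto
  qed
  moreover have "pcone (K1 \<union> K2)" using e1(3) e2(3) unfolding pcone_def by blast
  moreover have "e > 0" using e1 e2 by (simp add: e_def)
  ultimately show ?thesis unfolding locstr_def
    apply -
    apply (rule exI[of _ e])
    apply (rule conjI, assumption)
    apply (rule exI[of _ "K1 \<union> K2"])
    by (intro conjI) assumption+
qed

lemma locstr_empty: "locstr {} y"
  unfolding locstr_def fup_def pcone_def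
  by (intro exI[of _ 1] conjI exI[of _ "{}"]) auto

lemma poly_locstr:
  fixes P :: "'a::euclidean_space set"
  assumes P: "polyhedron P"
  shows "locstr P y"
proof -
  obtain F where F: "finite F" "P = \<Inter>F" "\<forall>h\<in>F. \<exists>a b. a \<noteq> 0 \<and> h = {x. a \<bullet> x \<le> b}"
    using P unfolding polyhedron_def by blast
  from bchoice[OF F(3)] obtain A where A: "\<forall>h\<in>F. \<exists>b. A h \<noteq> 0 \<and> h = {x. A h \<bullet> x \<le> b}" ..
  from bchoice[OF A] obtain B where AB: "\<forall>h\<in>F. A h \<noteq> 0 \<and> h = {x. A h \<bullet> x \<le> B h}" ..
  have mem: "x \<in> h \<longleftrightarrow> A h \<bullet> x \<le> B h" if "h \<in> F" for h x
  proof -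
    have "h = {x. A h \<bullet> x \<le> B h}" using bspec[OF AB that] by (rule conjunct2)
    hence "x \<in> h \<longleftrightarrow> x \<in> {x. A h \<bullet> x \<le> B h}" by (rule arg_cong[where f="\<lambda>S. x \<in> S"])
    thus ?thesis by simp
  qed
  have Peq: "P = {x. \<forall>h\<in>F. A h \<bullet> x \<le> B h}"
  proof (intro set_eqI)
    fix x
    have "x \<in> P \<longleftrightarrow> (\<forall>h\<in>F. x \<in> h)" using F(2) by simp
    also have "\<dots> \<longleftrightarrow> (\<forall>h\<in>F. A h \<bullet> x \<le> B h)" using mem by blast
    finally show "x \<in> P \<longleftrightarrow> x \<in> {x. \<forall>h\<in>F. A h \<bullet> x \<le> B h}" by simp
  qed
  show ?thesis
  proof (cases "y \<in> P")
    case False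
    have "closed P" using P polyhedron_imp_closed by blast
    hence "open (- P)" by auto
    then obtain e where e: "e > 0" "ball y e \<subseteq> - P" using False open_contains_ball by blast
    show ?thesis unfolding locstr_def fup_def pcone_def
      using e by (intro exI[of _ e] conjI exI[of _ "{}"]) auto
  next
    case True
    define act where "act = {h\<in>F. A h \<bullet> y = B h}"
    define ina where "ina = F - act"
    define e where "e = Min (insert 1 ((\<lambda>h. (B h - A h \<bullet> y) / (norm (A h) + 1)) ` ina))"
    define K where "K = {d. \<forall>h\<in>act. A h \<bullet> d \<le> 0}"
    have fin: "finite ina" "finite act" using F(1) by (auto simp: ina_def act_def)
    have inalt: "A h \<bullet> y < B h" if "h \<in> ina" for h
      using that True Peq by (force simp: ina_def act_def)
    have np1: "\<And>h. 0 < norm (A h) + 1" by (smt (verit) norm_ge_zero)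
    have e0: "e > 0" unfolding e_def using fin inalt np1
      by (subst Min_gr_iff) (auto intro!: divide_pos_pos)
    have ele: "e \<le> (B h - A h \<bullet> y) / (norm (A h) + 1)" if "h \<in> ina" for h
      unfolding e_def using fin that by (intro Min_le) auto
    have eq: "P \<inter> ball y e = {x. x - y \<in> K} \<inter> ball y e"
    proof (intro set_eqI iffI)
      fix x assume x: "x \<in> P \<inter> ball y e"
      hence "A h \<bullet> (x - y) \<le> 0" if "h \<in> act" for h
        using that Peq by (auto simp: act_def inner_diff_right)
      thus "x \<in> {x. x - y \<in> K} \<inter> ball y e" using x by (auto simp: K_def)
    next
      fix x assume x: "x \<in> {x. x - y \<in> K} \<inter> ball y e"
      have "A h \<bullet> x \<le> B h" if h: "h \<in> F" for h
      proof (cases "h \<in> act")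
        case True
        thus ?thesis using x by (auto simp: K_def act_def inner_diff_right)
      next
        case False
        hence hi: "h \<in> ina" using h by (simp add: ina_def)
        have nx: "norm (x - y) \<le> e" using x by (auto simp: dist_norm norm_minus_commute)
        have "A h \<bullet> (x - y) \<le> norm (A h) * norm (x - y)" by (rule norm_cauchy_schwarz)
        also have "\<dots> \<le> (norm (A h) + 1) * e"
          using nx by (intro mult_mono) auto
        also have "\<dots> \<le> (norm (A h) + 1) * ((B h - A h \<bullet> y) / (norm (A h) + 1))"
          using ele[OF hi] by (intro mult_left_mono) auto
        also have "\<dots> = B h - A h \<bullet> y"
          using np1[of h] by simp
        finally show ?thesis by (simp add: inner_diff_right)
      qed
      thus "x \<in> P \<inter> ball y e" using x Peq by auto
    qed
    have "K = \<Inter>((\<lambda>h. {d. A h \<bullet> d \<le> 0}) ` act)" by (auto simp: K_def)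
    hence "polyhedron K" using fin by (auto intro!: polyhedron_Inter polyhedron_halfspace_le)
    hence fK: "fup K" unfolding fup_def by (intro exI[of _ "{K}"]) auto
    have pK: "pcone K" unfolding pcone_def K_def
      by (auto simp: mult_nonpos_nonneg intro: mult_nonneg_nonpos)
    show ?thesis unfolding locstr_def
      apply (rule exI[of _ e])
      apply (rule conjI[OF e0])
      apply (rule exI[of _ K])
      by (intro conjI fK pK eq)
  qed
qed

lemma fup_locstr:
  assumes "fup S"
  shows "locstr S y"
proof -
  obtain KK where KK: "finite KK" "\<forall>p\<in>KK. polyhedron p" "S = \<Union>KK" using assms unfolding fup_def by blast
  have "locstr (\<Union>KK) y" using KK(1,2)
  proof (induction KK rule: finite_induct)
    case empty thus ?case using locstr_empty by simp
  next
    case (insert p KK)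
    thus ?case using locstr_union poly_locstr by (metis Union_insert insert_iff)
  qed
  thus ?thesis using KK by simp
qed

lemma locstr_local:
  assumes "locstr S y" "r > 0" "S \<inter> ball y r = S' \<inter> ball y r"
  shows "locstr S' y"
proof -
  obtain e K where e: "e > 0" "fup K" "pcone K" "S \<inter> ball y e = {x. x - y \<in> K} \<inter> ball y e"
    using assms(1) unfolding locstr_def by blast
  define e' where "e' = min e r"
  have "S \<inter> ball y e' = {x. x - y \<in> K} \<inter> ball y e'" using ball_eq_shrink[OF e(4)] by (simp add: e'_def)
  moreover have "S \<inter> ball y e' = S' \<inter> ball y e'" using ball_eq_shrink[OF assms(3)] by (simp add: e'_def)
  ultimately have "S' \<inter> ball y e' = {x. x - y \<in> K} \<inter> ball y e'" by simp
  moreover have "e' > 0" using e assms by (simp add: e'_def)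
  ultimately show ?thesis using e unfolding locstr_def
    apply -
    apply (rule exI[of _ e'])
    apply (rule conjI, assumption)
    apply (rule exI[of _ K])
    by (intro conjI) assumption+
qed



lemma lim_c_over: "((\<lambda>k. c / (real k + 1)) \<longlongrightarrow> (0::real)) sequentially"
proof -
  have "((\<lambda>k. c * inverse (real (Suc k))) \<longlongrightarrow> c * 0) sequentially"
    by (intro tendsto_mult tendsto_const LIMSEQ_inverse_real_of_nat)
  thus ?thesis by (simp add: divide_inverse add.commute)
qed

lemma divmul: "c \<noteq> 0 \<Longrightarrow> a / (b * c) * c = a / (b::real)"
  by (cases "b = 0") (auto simp: field_simps)

lemma rn_local_open:
  fixes S S' :: "'a::real_inner set"
  assumes U: "open U" "p \<in> U" and eq: "S \<inter> U = S' \<inter> U"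
    and h: "\<eta> \<in> regular_normal_cone S p"
  shows "\<eta> \<in> regular_normal_cone S' p"
proof -
  obtain r where r: "r > 0" "ball p r \<subseteq> U" using U open_contains_ball by blast
  have "S \<inter> ball p r = S' \<inter> ball p r" using r(2) eq by blast
  thus ?thesis using rn_local[OF r(1) _ h] by blast
qed

lemma tangent_locstr:
  fixes S K :: "'a::real_normed_vector set"
  assumes e: "e > 0" and eq: "S \<inter> ball y e = {x. x - y \<in> K} \<inter> ball y e"
    and cl: "closed K" and pc: "pcone K"
  shows "tangent_cone S y = K"
proof (intro set_eqI iffI)
  fix w assume "w \<in> tangent_cone S y"
  then obtain t ws where t: "\<forall>k. t k > (0::real)" "t \<longlonglongrightarrow> 0" and ws: "ws \<longlonglongrightarrow> w"
    and mem: "\<forall>k. y + t k *\<^sub>R ws k \<in> S"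
    unfolding tangent_cone_def by blast
  have "(\<lambda>k. t k *\<^sub>R ws k) \<longlonglongrightarrow> 0 *\<^sub>R w" by (intro tendsto_scaleR t(2) ws)
  hence "(\<lambda>k. norm (t k *\<^sub>R ws k)) \<longlonglongrightarrow> 0" using tendsto_norm_zero by force
  hence ev: "eventually (\<lambda>k. norm (t k *\<^sub>R ws k) < e) sequentially"
    using e by (rule order_tendstoD(2))
  have "eventually (\<lambda>k. ws k \<in> K) sequentially"
    using ev
  proof (rule eventually_mono)
    fix k assume nk: "norm (t k *\<^sub>R ws k) < e"
    have "y + t k *\<^sub>R ws k \<in> ball y e" using nk by (simp add: dist_norm)
    hence "y + t k *\<^sub>R ws k \<in> {x. x - y \<in> K} \<inter> ball y e" using mem eq by blast
    hence tk: "t k *\<^sub>R ws k \<in> K" by simp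
    have pos: "1 / t k > 0" using t(1) by simp
    have "(1 / t k) *\<^sub>R (t k *\<^sub>R ws k) \<in> K" using pc tk pos unfolding pcone_def by blast
    thus "ws k \<in> K" using t(1)[rule_format, of k] by simp
  qed
  thus "w \<in> K" using Lim_in_closed_set[OF cl _ trivial_limit_sequentially ws] by blast
next
  fix w assume w: "w \<in> K"
  define c where "c = e / (2 * (norm w + 1))"
  have "2 * (norm w + 1) > 0" by (smt (verit) norm_ge_zero)
  hence c0: "c > 0" unfolding c_def by (rule divide_pos_pos[OF e])
  define t where "t = (\<lambda>k. c / (real k + 1))"
  have t0: "t k > 0" for k using c0 by (simp add: t_def)
  have tl: "t \<longlonglongrightarrow> 0" unfolding t_def by (rule lim_c_over)
  have half: "c / (2 * (real k + 1)) < c" if "c > 0" for c :: real and k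
  proof -
    have a: "1 < 2 * (real k + 1)" by simp
    have "c / (2 * (real k + 1)) < c / 1"
      by (rule divide_strict_left_mono[OF a that]) simp
    thus ?thesis by simp
  qed
  have "y + t k *\<^sub>R w \<in> S" for k
  proof -
    have tw: "t k *\<^sub>R w \<in> K" using pc w t0 unfolding pcone_def by auto
    have tk: "t k = e / (2 * (real k + 1) * (norm w + 1))"
      unfolding t_def c_def by (simp only: divide_divide_eq_left mult.assoc mult.commute mult.left_commute)
    have "t k * norm w \<le> t k * (norm w + 1)" using t0[of k] by simp
    also have "\<dots> = e / (2 * (real k + 1) * (norm w + 1)) * (norm w + 1)" by (simp only: tk)
    also have "\<dots> = e / (2 * (real k + 1))"
      by (rule divmul) (smt (verit) norm_ge_zero)
    also have "\<dots> < e" by (rule half[OF e])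
    finally have "norm (t k *\<^sub>R w) < e" using t0[of k] by simp
    hence "y + t k *\<^sub>R w \<in> ball y e" by (simp add: dist_norm)
    hence "y + t k *\<^sub>R w \<in> {x. x - y \<in> K} \<inter> ball y e" using tw by simp
    thus ?thesis using eq by blast
  qed
  thus "w \<in> tangent_cone S y" unfolding tangent_cone_def
    using t0 tl by (intro CollectI exI[of _ t] exI[of _ "\<lambda>k. w"]) auto
qed

lemma step_normal:
  fixes D K K' :: "'a::real_inner set"
  assumes e: "e > 0" and eqD: "D \<inter> ball y e = {x. x - y \<in> K} \<inter> ball y e" and pK: "pcone K"
    and d: "d > 0" and eqK: "K \<inter> ball v d = {x. x - v \<in> K'} \<inter> ball v d" and pK': "pcone K'"
    and h: "\<eta> \<in> regular_normal_cone K' w'"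
    and tau: "\<tau> > 0" "\<tau> * norm w' < d" and t: "t > 0" "t * norm (v + \<tau> *\<^sub>R w') < e"
  shows "\<eta> \<in> regular_normal_cone D (y + t *\<^sub>R (v + \<tau> *\<^sub>R w'))"
proof -
  have a1: "\<eta> \<in> regular_normal_cone K' (\<tau> *\<^sub>R w')" by (rule rn_scale[OF pK' tau(1) h])
  have a2: "\<eta> \<in> regular_normal_cone {x. x - v \<in> K'} (v + \<tau> *\<^sub>R w')" by (rule rn_translate[OF a1])
  have m1: "v + \<tau> *\<^sub>R w' \<in> ball v d" using tau by (simp add: dist_norm)
  have a3: "\<eta> \<in> regular_normal_cone K (v + \<tau> *\<^sub>R w')"
    by (rule rn_local_open[OF open_ball m1 eqK[symmetric] a2])
  have a4: "\<eta> \<in> regular_normal_cone K (t *\<^sub>R (v + \<tau> *\<^sub>R w'))" by (rule rn_scale[OF pK t(1) a3])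
  have a5: "\<eta> \<in> regular_normal_cone {x. x - y \<in> K} (y + t *\<^sub>R (v + \<tau> *\<^sub>R w'))" by (rule rn_translate[OF a4])
  have m2: "y + t *\<^sub>R (v + \<tau> *\<^sub>R w') \<in> ball y e" using t by (simp add: dist_norm)
  show ?thesis by (rule rn_local_open[OF open_ball m2 eqD[symmetric] a5])
qed

lemma key:
  fixes D K K' :: "'a::real_inner set"
  assumes e: "e > 0" and eqD: "D \<inter> ball y e = {x. x - y \<in> K} \<inter> ball y e" and pK: "pcone K"
    and d: "d > 0" and eqK: "K \<inter> ball v d = {x. x - v \<in> K'} \<inter> ball v d" and pK': "pcone K'"
  shows "limiting_normal_cone K' w \<subseteq> dir_limiting_normal_cone D y v"
proof
  fix \<eta> assume "\<eta> \<in> limiting_normal_cone K' w"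
  then obtain xs es where xs: "xs \<longlonglongrightarrow> w" and es: "es \<longlonglongrightarrow> \<eta>"
    and h: "\<forall>k. es k \<in> regular_normal_cone K' (xs k)"
    unfolding limiting_normal_cone_def by blast
  define tau where "tau = (\<lambda>k. d / (2 * (real k + 1) * (norm (xs k) + 1)))"
  define ws where "ws = (\<lambda>k. v + tau k *\<^sub>R xs k)"
  define t where "t = (\<lambda>k. e / (2 * (real k + 1) * (norm (ws k) + 1)))"
  have np: "\<And>z::'a. norm z + 1 > 0" by (smt (verit) norm_ge_zero)
  have tau0: "tau k > 0" for k using d np[of "xs k"] by (simp add: tau_def)
  have t0: "t k > 0" for k using e np[of "ws k"] by (simp add: t_def)
  have taub: "tau k * norm (xs k) \<le> d / (2 * (real k + 1))" for k
  proof -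
    have "tau k * norm (xs k) \<le> tau k * (norm (xs k) + 1)" using tau0[of k] by simp
    also have "\<dots> = d / (2 * (real k + 1))" using np[of "xs k"]
      unfolding tau_def by (intro divmul) simp
    finally show ?thesis .
  qed
  have tb: "t k * norm (ws k) \<le> e / (2 * (real k + 1))" for k
  proof -
    have "t k * norm (ws k) \<le> t k * (norm (ws k) + 1)" using t0[of k] by simp
    also have "\<dots> = e / (2 * (real k + 1))" using np[of "ws k"]
      unfolding t_def by (intro divmul) simp
    finally show ?thesis .
  qed
  have half: "c / (2 * (real k + 1)) < c" if "c > 0" for c :: real and k
  proof -
    have a: "1 < 2 * (real k + 1)" by simp
    have "c / (2 * (real k + 1)) < c / 1"
      by (rule divide_strict_left_mono[OF a that]) simp
    thus ?thesis by simp
  qed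
  have "es k \<in> regular_normal_cone D (y + t k *\<^sub>R ws k)" for k
    unfolding ws_def
  proof (rule step_normal[OF e eqD pK d eqK pK' h[rule_format] tau0])
    show "tau k * norm (xs k) < d" using taub[of k] half[OF d, of k] by linarith
    show "0 < t k" by (rule t0)
    show "t k * norm (v + tau k *\<^sub>R xs k) < e" using tb[of k] half[OF e, of k] unfolding ws_def by linarith
  qed
  moreover have "t \<longlonglongrightarrow> 0"
  proof (rule Lim_null_comparison[OF _ lim_c_over[of "e/2"]])
    show "\<forall>\<^sub>F k in sequentially. norm (t k) \<le> e / 2 / (real k + 1)"
    proof (intro always_eventually allI)
      fix k
      have "t k \<le> e / (2 * (real k + 1))"
        unfolding t_def using e np[of "ws k"]
        by (intro divide_left_mono) (auto intro!: mult_pos_pos simp: add_pos_nonneg)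
      thus "norm (t k) \<le> e / 2 / (real k + 1)" using t0[of k] by simp
    qed
  qed
  moreover have "ws \<longlonglongrightarrow> v"
  proof -
    have "(\<lambda>k. tau k *\<^sub>R xs k) \<longlonglongrightarrow> 0"
    proof (rule Lim_null_comparison[OF _ lim_c_over[of "d/2"]])
      show "\<forall>\<^sub>F k in sequentially. norm (tau k *\<^sub>R xs k) \<le> d / 2 / (real k + 1)"
        using taub tau0 by (intro always_eventually allI) (simp add: less_imp_le)
    qed
    hence "(\<lambda>k. v + tau k *\<^sub>R xs k) \<longlonglongrightarrow> v + 0" by (intro tendsto_add tendsto_const)
    thus ?thesis by (simp add: ws_def)
  qed
  ultimately show "\<eta> \<in> dir_limiting_normal_cone D y v"
    unfolding dir_limiting_normal_cone_def using t0 es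
    by (intro CollectI exI[of _ t] exI[of _ ws] exI[of _ es]) auto
qed

lemma dir_sub_lnc: "dir_limiting_normal_cone S x v \<subseteq> limiting_normal_cone S x"
proof
  fix \<eta> assume "\<eta> \<in> dir_limiting_normal_cone S x v"
  then obtain t ws es where t: "\<forall>k. t k > (0::real)" "t \<longlonglongrightarrow> 0" and ws: "ws \<longlonglongrightarrow> v"
    and es: "es \<longlonglongrightarrow> \<eta>" and h: "\<forall>k. es k \<in> regular_normal_cone S (x + t k *\<^sub>R ws k)"
    unfolding dir_limiting_normal_cone_def by blast
  have inS: "x + t k *\<^sub>R ws k \<in> S" for k
    using h[rule_format, of k] by (auto simp: regular_normal_cone_def split: if_splits)
  have "(\<lambda>k. x + t k *\<^sub>R ws k) \<longlonglongrightarrow> x + 0 *\<^sub>R v" by (intro tendsto_intros t(2) ws)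
  hence "(\<lambda>k. x + t k *\<^sub>R ws k) \<longlonglongrightarrow> x" by simp
  thus "\<eta> \<in> limiting_normal_cone S x" unfolding limiting_normal_cone_def
    using inS es h by (intro CollectI exI[of _ "\<lambda>k. x + t k *\<^sub>R ws k"] exI[of _ es]) auto
qed

lemma lnc_smult:
  assumes c: "c > 0" and h: "\<eta> \<in> limiting_normal_cone S x"
  shows "c *\<^sub>R \<eta> \<in> limiting_normal_cone S x"
proof -
  obtain xs es where xs: "\<forall>k. xs k \<in> S" "xs \<longlonglongrightarrow> x" and es: "es \<longlonglongrightarrow> \<eta>"
    and r: "\<forall>k. es k \<in> regular_normal_cone S (xs k)"
    using h unfolding limiting_normal_cone_def by blast
  have "(\<lambda>k. c *\<^sub>R es k) \<longlonglongrightarrow> c *\<^sub>R \<eta>" by (intro tendsto_intros es)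
  moreover have "\<forall>k. c *\<^sub>R es k \<in> regular_normal_cone S (xs k)" using r rn_smult[OF c] by blast
  ultimately show ?thesis unfolding limiting_normal_cone_def using xs
    by (intro CollectI exI[of _ xs] exI[of _ "\<lambda>k. c *\<^sub>R es k"]) auto
qed

lemma lnc_perp:
  assumes pK: "pcone K" and h: "\<eta> \<in> limiting_normal_cone K w"
  shows "\<eta> \<bullet> w = 0"
proof -
  obtain xs es where xs: "xs \<longlonglongrightarrow> w" and es: "es \<longlonglongrightarrow> \<eta>"
    and r: "\<forall>k. es k \<in> regular_normal_cone K (xs k)"
    using h unfolding limiting_normal_cone_def by blast
  have "(\<lambda>k. es k \<bullet> xs k) \<longlonglongrightarrow> \<eta> \<bullet> w" by (intro tendsto_intros es xs)
  moreover have "(\<lambda>k. es k \<bullet> xs k) = (\<lambda>k. 0)" using r rn_perp[OF pK] by auto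
  ultimately have "(\<lambda>k. 0::real) \<longlonglongrightarrow> \<eta> \<bullet> w" by simp
  thus ?thesis using LIMSEQ_unique tendsto_const by metis
qed

lemma tangent_zero_sub:
  fixes C :: "'a::real_normed_vector set"
  assumes sub: "A \<subseteq> C" and cl: "closed C" and sc: "\<forall>z\<in>C. \<forall>c>0. c *\<^sub>R z \<in> C"
  shows "tangent_cone A 0 \<subseteq> C"
proof
  fix z assume "z \<in> tangent_cone A 0"
  then obtain t ws where t: "\<forall>k. t k > (0::real)" and ws: "ws \<longlonglongrightarrow> z"
    and mem: "\<forall>k. 0 + t k *\<^sub>R ws k \<in> A"
    unfolding tangent_cone_def by blast
  have "ws k \<in> C" for k
  proof -
    have "t k *\<^sub>R ws k \<in> C" using mem sub by auto
    moreover have pos: "1 / t k > 0" using t by simp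
    ultimately have "(1 / t k) *\<^sub>R (t k *\<^sub>R ws k) \<in> C" using sc by blast
    thus ?thesis using t[rule_format, of k] by simp
  qed
  thus "z \<in> C" using Lim_in_closed_set[OF cl _ trivial_limit_sequentially ws] by simp
qed



lemma lnc_closed: "closed (limiting_normal_cone (S::'a::real_inner set) x)"
  unfolding closed_sequential_limits
proof (intro allI impI, elim conjE)
  fix E l assume E: "\<forall>n. E n \<in> limiting_normal_cone S x" and El: "E \<longlonglongrightarrow> l"
  from E have "\<forall>n. \<exists>xs es. (\<forall>k. xs k \<in> S) \<and> xs \<longlonglongrightarrow> x \<and> es \<longlonglongrightarrow> E n
      \<and> (\<forall>k. es k \<in> regular_normal_cone S (xs k))"
    unfolding limiting_normal_cone_def by blast
  from choice[OF this] obtain XS where "\<forall>n. \<exists>es. (\<forall>k. XS n k \<in> S) \<and> XS n \<longlonglongrightarrow> x \<and> es \<longlonglongrightarrow> E n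
      \<and> (\<forall>k. es k \<in> regular_normal_cone S (XS n k))" ..
  from choice[OF this] obtain ES where H: "\<forall>n. (\<forall>k. XS n k \<in> S) \<and> XS n \<longlonglongrightarrow> x \<and> ES n \<longlonglongrightarrow> E n
      \<and> (\<forall>k. ES n k \<in> regular_normal_cone S (XS n k))" ..
  have "\<exists>k. dist (XS n k) x < 1 / (real n + 1) \<and> dist (ES n k) (E n) < 1 / (real n + 1)" for n
  proof -
    have p: "1 / (real n + 1) > 0" by simp
    have "eventually (\<lambda>k. dist (XS n k) x < 1 / (real n + 1)) sequentially"
      using H p tendstoD by blast
    moreover have "eventually (\<lambda>k. dist (ES n k) (E n) < 1 / (real n + 1)) sequentially"
      using H p tendstoD by blast
    ultimately have "eventually (\<lambda>k. dist (XS n k) x < 1 / (real n + 1) \<and> dist (ES n k) (E n) < 1 / (real n + 1)) sequentially"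
      by (rule eventually_conj)
    then obtain N where "\<forall>k\<ge>N. dist (XS n k) x < 1 / (real n + 1) \<and> dist (ES n k) (E n) < 1 / (real n + 1)"
      unfolding eventually_sequentially by blast
    thus ?thesis by blast
  qed
  from choice[OF allI[OF this]] obtain KK where KK: "\<forall>n. dist (XS n (KK n)) x < 1 / (real n + 1) \<and> dist (ES n (KK n)) (E n) < 1 / (real n + 1)" ..
  define xs where "xs = (\<lambda>n. XS n (KK n))"
  define es where "es = (\<lambda>n. ES n (KK n))"
  have "(\<lambda>n. xs n - x) \<longlonglongrightarrow> 0"
  proof (rule Lim_null_comparison[OF _ lim_c_over[of 1]])
    show "\<forall>\<^sub>F n in sequentially. norm (xs n - x) \<le> 1 / (real n + 1)"
      using KK by (intro always_eventually allI) (simp add: xs_def dist_norm less_imp_le)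
  qed
  hence xl: "xs \<longlonglongrightarrow> x" by (rule LIM_zero_cancel)
  have "(\<lambda>n. es n - l) \<longlonglongrightarrow> 0"
  proof (rule Lim_null_comparison)
    show "\<forall>\<^sub>F n in sequentially. norm (es n - l) \<le> 1 / (real n + 1) + norm (E n - l)"
    proof (intro always_eventually allI)
      fix n
      have "norm (es n - l) \<le> norm (es n - E n) + norm (E n - l)" using norm_triangle_ineq[of "es n - E n" "E n - l"] by simp
      also have "norm (es n - E n) \<le> 1 / (real n + 1)" using KK by (simp add: es_def dist_norm less_imp_le)
      hence "norm (es n - E n) + norm (E n - l) \<le> 1 / (real n + 1) + norm (E n - l)" by simp
      finally show "norm (es n - l) \<le> 1 / (real n + 1) + norm (E n - l)" .
    qed
    have "(\<lambda>n. norm (E n - l)) \<longlonglongrightarrow> 0" using El tendsto_norm_zero LIM_zero by blast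
    thus "(\<lambda>n. 1 / (real n + 1) + norm (E n - l)) \<longlonglongrightarrow> 0"
      using tendsto_add_zero[OF lim_c_over[of 1]] by blast
  qed
  hence el: "es \<longlonglongrightarrow> l" by (rule LIM_zero_cancel)
  show "l \<in> limiting_normal_cone S x" unfolding limiting_normal_cone_def
    using H xl el by (intro CollectI exI[of _ xs] exI[of _ es]) (auto simp: xs_def es_def)
qed



theorem proposition5p22:
  fixes g :: "'a::euclidean_space \<Rightarrow> real ^ 'm"
    and Dg :: "'a \<Rightarrow> 'a \<Rightarrow> real ^ 'm"
    and D2g :: "'a \<Rightarrow> 'a \<Rightarrow> 'a \<Rightarrow> real ^ 'm"
    and D :: "(real ^ 'm) set"
    and xbar u :: 'a
  assumes deriv1: "\<And>x. (g has_derivative Dg x) (at x)"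
    and deriv2: "\<And>x h. ((\<lambda>x. Dg x h) has_derivative D2g x h) (at x)"
    and cont2: "\<And>h k. continuous_on UNIV (\<lambda>x. D2g x h k)"
    and closedD: "closed D"
    and polyD: "locally_polyhedral D (g xbar)"
    and feas: "g xbar \<in> D"
    and unit: "norm u = 1"
    and SOSCMS: "\<And>y. adjoint (Dg xbar) y = 0 \<Longrightarrow> lag_hess_form (D2g xbar) y u \<ge> 0 \<Longrightarrow>
                   y \<in> dir_limiting_normal_cone D (g xbar) (Dg xbar u) \<Longrightarrow> y = 0"
  defines "TT \<equiv> tangent_cone (tangent_cone D (g xbar)) (Dg xbar u)"
  shows
    "(\<forall>s y z. adjoint (Dg xbar) y = 0
        \<and> lag_hess_apply (D2g xbar) y u + adjoint (Dg xbar) z = 0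
        \<and> y \<in> limiting_normal_cone TT (w_s (Dg xbar) (D2g xbar) s u 0)
        \<and> (z \<in> limiting_normal_cone TT (w_s (Dg xbar) (D2g xbar) s u 0)
           \<or> z \<in> tangent_cone (limiting_normal_cone TT (w_s (Dg xbar) (D2g xbar) s u 0)) y)
        \<longrightarrow> y = 0)
   \<and> (\<forall>xs s y z (\<alpha>::real). \<alpha> \<ge> 0
        \<and> xs = lag_hess_apply (D2g xbar) y u + adjoint (Dg xbar) z
        \<and> y \<in> limiting_normal_cone TT (w_s (Dg xbar) (D2g xbar) s u (\<alpha> *\<^sub>R y))
        \<and> adjoint (Dg xbar) y = 0
        \<and> (z \<in> limiting_normal_cone TT (w_s (Dg xbar) (D2g xbar) s u (\<alpha> *\<^sub>R y))
           \<or> z \<in> tangent_cone (limiting_normal_cone TT (w_s (Dg xbar) (D2g xbar) s u (\<alpha> *\<^sub>R y))) y)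
        \<longrightarrow> (\<exists>lam\<in>limiting_normal_cone D (g xbar). xs = adjoint (Dg xbar) lam))"
proof -
  define v where "v = Dg xbar u"
  have linDg: "linear (Dg xbar)"
    by (rule bounded_linear.linear[OF has_derivative_bounded_linear[OF deriv1[of xbar]]])
  have linD2: "linear (D2g xbar u)"
    by (rule bounded_linear.linear[OF has_derivative_bounded_linear[OF deriv2[of u xbar]]])
  obtain a b P where ab: "g xbar \<in> box a b" "finite P" "\<forall>p\<in>P. polyhedron p" "D \<inter> cbox a b = \<Union>P"
    using polyD unfolding locally_polyhedral_def by blast
  have "fup (\<Union>P)" unfolding fup_def using ab(2,3) by (intro exI[of _ P] conjI) auto
  hence ls: "locstr (\<Union>P) (g xbar)" by (rule fup_locstr)
  obtain r where r: "r > 0" "ball (g xbar) r \<subseteq> box a b"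
    using ab(1) open_box open_contains_ball by blast
  have "ball (g xbar) r \<subseteq> cbox a b" using r(2) box_subset_cbox by blast
  hence "D \<inter> ball (g xbar) r = (D \<inter> cbox a b) \<inter> ball (g xbar) r" by blast
  hence "(\<Union>P) \<inter> ball (g xbar) r = D \<inter> ball (g xbar) r" by (simp only: ab(4))
  hence "locstr D (g xbar)" by (rule locstr_local[OF ls r(1)])
  then obtain e K where eK: "e > 0" "fup K" "pcone K"
      "D \<inter> ball (g xbar) e = {x. x - g xbar \<in> K} \<inter> ball (g xbar) e"
    unfolding locstr_def by blast
  have TD: "tangent_cone D (g xbar) = K"
    by (rule tangent_locstr[OF eK(1) eK(4) fup_closed[OF eK(2)] eK(3)])
  have "locstr K v" by (rule fup_locstr[OF eK(2)])
  then obtain d K' where dK: "d > 0" "fup K'" "pcone K'"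
      "K \<inter> ball v d = {x. x - v \<in> K'} \<inter> ball v d"
    unfolding locstr_def by blast
  have TT: "TT = K'" unfolding TT_def TD v_def[symmetric]
    by (rule tangent_locstr[OF dK(1) dK(4) fup_closed[OF dK(2)] dK(3)])
  have KEY: "limiting_normal_cone TT w \<subseteq> dir_limiting_normal_cone D (g xbar) (Dg xbar u)" for w
    unfolding TT v_def[symmetric] by (rule key[OF eK(1) eK(4) eK(3) dK(1) dK(4) dK(3)])
  have KEY2: "limiting_normal_cone TT w \<subseteq> limiting_normal_cone D (g xbar)" for w
    using KEY dir_sub_lnc by blast
  have zero: "y = 0" if y: "y \<in> limiting_normal_cone TT (w_s (Dg xbar) (D2g xbar) s u (\<alpha> *\<^sub>R y))"
    and adj: "adjoint (Dg xbar) y = 0" and al: "\<alpha> \<ge> 0" for y s \<alpha>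
  proof -
    have pT: "pcone TT" using TT dK(3) by simp
    have perp: "y \<bullet> w_s (Dg xbar) (D2g xbar) s u (\<alpha> *\<^sub>R y) = 0" by (rule lnc_perp[OF pT y])
    have "s \<bullet> adjoint (Dg xbar) y = Dg xbar s \<bullet> y" by (rule adjoint_works[OF linDg])
    hence ds: "y \<bullet> Dg xbar s = 0" using adj by (simp add: inner_commute)
    have "y \<bullet> w_s (Dg xbar) (D2g xbar) s u (\<alpha> *\<^sub>R y) = y \<bullet> Dg xbar s + (1/2) * (y \<bullet> D2g xbar u u) - \<alpha> * (y \<bullet> y)"
      unfolding w_s_def by (simp add: inner_diff_right inner_add_right)
    hence "(1/2) * (y \<bullet> D2g xbar u u) = \<alpha> * (y \<bullet> y)" using perp ds by simp
    hence "lag_hess_form (D2g xbar) y u = 2 * \<alpha> * (y \<bullet> y)" unfolding lag_hess_form_def by simp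
    hence "lag_hess_form (D2g xbar) y u \<ge> 0" using al by simp
    moreover have "y \<in> dir_limiting_normal_cone D (g xbar) (Dg xbar u)" using KEY y by blast
    ultimately show ?thesis using SOSCMS adj by blast
  qed
  have partA: "\<forall>s y z. adjoint (Dg xbar) y = 0
        \<and> lag_hess_apply (D2g xbar) y u + adjoint (Dg xbar) z = 0
        \<and> y \<in> limiting_normal_cone TT (w_s (Dg xbar) (D2g xbar) s u 0)
        \<and> (z \<in> limiting_normal_cone TT (w_s (Dg xbar) (D2g xbar) s u 0)
           \<or> z \<in> tangent_cone (limiting_normal_cone TT (w_s (Dg xbar) (D2g xbar) s u 0)) y)
        \<longrightarrow> y = 0"
  proof (intro allI impI)
    fix s y z
    assume H: "adjoint (Dg xbar) y = 0
        \<and> lag_hess_apply (D2g xbar) y u + adjoint (Dg xbar) z = 0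
        \<and> y \<in> limiting_normal_cone TT (w_s (Dg xbar) (D2g xbar) s u 0)
        \<and> (z \<in> limiting_normal_cone TT (w_s (Dg xbar) (D2g xbar) s u 0)
           \<or> z \<in> tangent_cone (limiting_normal_cone TT (w_s (Dg xbar) (D2g xbar) s u 0)) y)"
    have adj: "adjoint (Dg xbar) y = 0" using H by (rule conjunct1)
    have "y \<in> limiting_normal_cone TT (w_s (Dg xbar) (D2g xbar) s u 0)"
      using H by (elim conjE)
    hence yin: "y \<in> limiting_normal_cone TT (w_s (Dg xbar) (D2g xbar) s u ((0::real) *\<^sub>R y))"
      by (simp only: scale_zero_left)
    show "y = 0" by (rule zero[OF yin adj]) simp
  qed
  have partB: "\<forall>xs s y z (\<alpha>::real). \<alpha> \<ge> 0
        \<and> xs = lag_hess_apply (D2g xbar) y u + adjoint (Dg xbar) z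
        \<and> y \<in> limiting_normal_cone TT (w_s (Dg xbar) (D2g xbar) s u (\<alpha> *\<^sub>R y))
        \<and> adjoint (Dg xbar) y = 0
        \<and> (z \<in> limiting_normal_cone TT (w_s (Dg xbar) (D2g xbar) s u (\<alpha> *\<^sub>R y))
           \<or> z \<in> tangent_cone (limiting_normal_cone TT (w_s (Dg xbar) (D2g xbar) s u (\<alpha> *\<^sub>R y))) y)
        \<longrightarrow> (\<exists>lam\<in>limiting_normal_cone D (g xbar). xs = adjoint (Dg xbar) lam)"
  proof (intro allI impI)
    fix xs s y z and \<alpha> :: real
    assume H: "\<alpha> \<ge> 0
        \<and> xs = lag_hess_apply (D2g xbar) y u + adjoint (Dg xbar) z
        \<and> y \<in> limiting_normal_cone TT (w_s (Dg xbar) (D2g xbar) s u (\<alpha> *\<^sub>R y))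
        \<and> adjoint (Dg xbar) y = 0
        \<and> (z \<in> limiting_normal_cone TT (w_s (Dg xbar) (D2g xbar) s u (\<alpha> *\<^sub>R y))
           \<or> z \<in> tangent_cone (limiting_normal_cone TT (w_s (Dg xbar) (D2g xbar) s u (\<alpha> *\<^sub>R y))) y)"
    define w where "w = w_s (Dg xbar) (D2g xbar) s u (\<alpha> *\<^sub>R y)"
    have al: "\<alpha> \<ge> 0" using H by (elim conjE)
    have yin: "y \<in> limiting_normal_cone TT (w_s (Dg xbar) (D2g xbar) s u (\<alpha> *\<^sub>R y))" using H by (elim conjE)
    have adj: "adjoint (Dg xbar) y = 0" using H by (elim conjE)
    have y0: "y = 0" by (rule zero[OF yin adj al])
    have "lag_hess_apply (D2g xbar) y u = 0"
      unfolding lag_hess_apply_def y0 by (rule linear_0[OF adjoint_linear[OF linD2]])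
    moreover have "xs = lag_hess_apply (D2g xbar) y u + adjoint (Dg xbar) z" using H by (elim conjE)
    ultimately have xs: "xs = adjoint (Dg xbar) z" by simp
    have "z \<in> limiting_normal_cone TT w \<or> z \<in> tangent_cone (limiting_normal_cone TT w) y"
      using H unfolding w_def by (elim conjE)
    hence zin: "z \<in> limiting_normal_cone TT w \<or> z \<in> tangent_cone (limiting_normal_cone TT w) 0"
      by (simp only: y0)
    have "z \<in> limiting_normal_cone D (g xbar)"
      using zin
    proof
      assume "z \<in> limiting_normal_cone TT w" thus ?thesis using KEY2 by blast
    next
      assume z: "z \<in> tangent_cone (limiting_normal_cone TT w) 0"
      have "tangent_cone (limiting_normal_cone TT w) 0 \<subseteq> limiting_normal_cone D (g xbar)"
        by (rule tangent_zero_sub[OF KEY2 lnc_closed]) (auto intro: lnc_smult)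
      thus ?thesis using z by blast
    qed
    thus "\<exists>lam\<in>limiting_normal_cone D (g xbar). xs = adjoint (Dg xbar) lam" using xs by blast
  qed
  show ?thesis by (rule conjI[OF partA partB])
qed


end
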